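(* Let $\phi:T_1\times\cdots\times T_k\to T$ be a multi-valued logic gate with Fourier series expansion $\overline{\phi}$. If $\mathrm{cs}(\overline{\phi})=N(\overline{\phi})$, then $\overline{\phi}$ is one-to-one on the interior of $\Delta^{n_1-1}\times\cdots\times\Delta^{n_k-1}$.
   Context: Standard simplex: $\Delta^{m}=\{(t_0,\dots,t_m)\in\mathbb{R}^{m+1}: t_i\ge 0,\ \sum_i t_i=1\}$. For $0\le j\le m$, $\Delta^m_j=\{(t_0,\dots,\widehat{t_j},\dots,t_m): (t_0,\dots,t_m)\in\Delta^m,\ t_j\neq 0\}\subseteq\mathbb{R}^m$ (the hat means the coordinate is omitted). Multi-valued logic gate: $k\ge1$; for $i=1,\dots,k$ a finite set $T_i=\{w(i,0),\dots,w(i,n_i-1)\}$ with $n_i$ elements; a finite set $T=\{v_1,\dots,v_n\}\subset\mathbb{R}^m$; and a function $\phi:T_1\times\cdots\times T_k\to T$. Its Fourier series expansion is $\overline{\phi}:\Delta^{n_1-1}\times\cdots\times\Delta^{n_k-1}\to\mathbb{R}^m$, $\overline{\phi}\big((t_{1,j})_{j=0}^{n_1-1},\dots,(t_{k,j})_{j=0}^{n_k-1}\big)=\sum_{(j_1,\dots,j_k)}\Big(\prod_{s=1}^k t_{s,j_s}\Big)\,\phi(w(1,j_1),\dots,w(k,j_k))$, the sum over all $0\le j_s\le n_s-1$. Put $N=N(\overline{\phi})=n_1+\cdots+n_k-k$. For $z=(w(1,j(z,1)),\dots,w(k,j(z,k)))\in T_1\times\cdots\times T_k$: $C(\overline{\phi},z)=\Delta^{n_1-1}_{j(z,1)}\times\cdots\times\Delta^{n_k-1}_{j(z,k)}\subseteq\mathbb{R}^N$,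 and $f_z:\mathbb{R}^N\to\mathbb{R}^m$ is the polynomial map in the variables $t_{i,j}$ ($1\le i\le k$, $0\le j\le n_i-1$, $j\neq j(z,i)$, ordered lexicographically by $(i,j)$) obtained from the multilinear polynomial formula for $\overline{\phi}$ by substituting $t_{i,j(z,i)}=1-\sum_{0\le j\le n_i-1,\,j\neq j(z,i)}t_{i,j}$. Sign conventions: $\mathrm{sgn}(x)\in\{+1,0,-1\}$ is the usual sign. For $g:\mathbb{R}^N\to\mathbb{R}$ and nonempty $C$, $\mathrm{sign}_C(g)=+1$, $0$, $-1$ if $g>0$, $g=0$, $g<0$ on all of $C$ respectively, and $u$ (formal symbol) otherwise; for differentiable $g$, $\mathrm{Sign}_C(g)=(\mathrm{sign}_C(\partial g/\partial x_1),\dots,\mathrm{sign}_C(\partial g/\partial x_N))$. $S_N$: the set of nonzero $s\in\{-1,0,1\}^N$ whose first nonzero entry is $1$. A tuple $t\in\{1,0,-1,u\}^N$ eliminates $s\in S_N$ if (i) $t_i\ne0$ and $s_i\neq0$ for some $i$; (ii) there is $k\in\{\pm1\}$ with $t_i=ks_i$ whenever $s_i\neq0$ and $t_i\neq0$; (iii) $s_i=0$ whenever $t_i=u$. For a set $X$ of such tuples, $\mathrm{Elim}(X)$ is the set of elements of $S_N$ eliminated by some element of $X$. For convex $C\subseteq\mathbb{R}^N$ and differentiable $f:\mathbb{R}^N\to\mathbb{R}^m$, $\mathrm{Sens}_C(f)$ is the set of $v\in S_N$ such that $\mathrm{Sign}_C(\pi\circ f)$ eliminates $v$ for some differentiable $\pi:\mathbb{R}^m\to\mathbb{R}$.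 Continuous sensitivity: $\mathrm{cs}(\overline{\phi},z)=\log_3\big(3^{N}-2\,|\mathrm{Elim}(S_N\setminus\mathrm{Sens}_{C(\overline{\phi},z)}(f_z))|\big)$ and $\mathrm{cs}(\overline{\phi})=\max_{z\in T_1\times\cdots\times T_k}\mathrm{cs}(\overline{\phi},z)$. *)

theory Defs
  imports "HOL-Analysis.Analysis"
begin

datatype sgnu = SPos | SZero | SNeg | SU

definition int_to_sgnu :: "int \<Rightarrow> sgnu" where
  "int_to_sgnu x = (if x > 0 then SPos else if x = 0 then SZero else SNeg)"

text \<open>sign_C(g) for g : R^N -> R (points of R^N are functions nat => real).\<close>
definition sign_on :: "(nat \<Rightarrow> real) set \<Rightarrow> ((nat \<Rightarrow> real) \<Rightarrow> real) \<Rightarrow> sgnu" where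
  "sign_on C g =
     (if \<forall>x\<in>C. g x > 0 then SPos
      else if \<forall>x\<in>C. g x = 0 then SZero
      else if \<forall>x\<in>C. g x < 0 then SNeg
      else SU)"

text \<open>Partial derivative of g with respect to the coordinate x_p (0-based) at the point x.\<close>
definition partial_deriv :: "((nat \<Rightarrow> real) \<Rightarrow> real) \<Rightarrow> nat \<Rightarrow> (nat \<Rightarrow> real) \<Rightarrow> real" where
  "partial_deriv g p x = deriv (\<lambda>h. g (x(p := x p + h))) 0"

definition Sign_on :: "nat \<Rightarrow> (nat \<Rightarrow> real) set \<Rightarrow> ((nat \<Rightarrow> real) \<Rightarrow> real) \<Rightarrow> sgnu list" where
  "Sign_on N C g = map (\<lambda>p. sign_on C (partial_deriv g p)) [0..<N]"

definition S_set :: "nat \<Rightarrow> int list set" where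
  "S_set N = {s. length s = N \<and> set s \<subseteq> {-1, 0, 1} \<and> (\<exists>i<N. s ! i \<noteq> 0)
                 \<and> (\<forall>i<N. s ! i \<noteq> 0 \<and> (\<forall>j<i. s ! j = 0) \<longrightarrow> s ! i = 1)}"

definition eliminates :: "nat \<Rightarrow> sgnu list \<Rightarrow> int list \<Rightarrow> bool" where
  "eliminates N t s \<longleftrightarrow>
     (\<exists>i<N. t ! i \<noteq> SZero \<and> s ! i \<noteq> 0) \<and>
     (\<exists>\<kappa>\<in>{1, -1::int}. \<forall>i<N. s ! i \<noteq> 0 \<and> t ! i \<noteq> SZero \<longrightarrow> t ! i = int_to_sgnu (\<kappa> * s ! i)) \<and>
     (\<forall>i<N. t ! i = SU \<longrightarrow> s ! i = 0)"

definition Elim :: "nat \<Rightarrow> sgnu list set \<Rightarrow> int list set" where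
  "Elim N X = {s \<in> S_set N. \<exists>t\<in>X. eliminates N t s}"

definition Elim_S :: "nat \<Rightarrow> int list set \<Rightarrow> int list set" where
  "Elim_S N X = Elim N ((map int_to_sgnu) ` X)"

definition Sens :: "nat \<Rightarrow> (nat \<Rightarrow> real) set \<Rightarrow> ((nat \<Rightarrow> real) \<Rightarrow> real ^ 'm) \<Rightarrow> int list set" where
  "Sens N C f = {v \<in> S_set N. \<exists>\<pi> :: real ^ 'm \<Rightarrow> real.
                    (\<forall>y. \<pi> differentiable (at y)) \<and> eliminates N (Sign_on N C (\<pi> \<circ> f)) v}"

text \<open>T_i is identified with the index set {0..<n i} (w(i,j) ~ j), for i < k (0-based);
  a gate is a map phi from index tuples J (J i < n i for i < k) to R^m = real^'m.\<close>

definition idx_tuples :: "nat \<Rightarrow> (nat \<Rightarrow> nat) \<Rightarrow> (nat \<Rightarrow> nat) set" where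
  "idx_tuples k n = PiE {..<k} (\<lambda>i. {..<n i})"

text \<open>The multilinear polynomial formula of the Fourier series expansion (evaluated at any t).\<close>
definition fourier :: "nat \<Rightarrow> (nat \<Rightarrow> nat) \<Rightarrow> ((nat \<Rightarrow> nat) \<Rightarrow> real ^ 'm)
                         \<Rightarrow> (nat \<Rightarrow> nat \<Rightarrow> real) \<Rightarrow> real ^ 'm" where
  "fourier k n \<phi> t = (\<Sum>J\<in>idx_tuples k n. (\<Prod>s<k. t s (J s)) *\<^sub>R \<phi> J)"

definition NN :: "nat \<Rightarrow> (nat \<Rightarrow> nat) \<Rightarrow> nat" where
  "NN k n = (\<Sum>i<k. n i) - k"

text \<open>Offset of block i among the N coordinates (lexicographic order on (i,j)).\<close>
definition blk_off :: "(nat \<Rightarrow> nat) \<Rightarrow> nat \<Rightarrow> nat" where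
  "blk_off n i = (\<Sum>s<i. n s - 1)"

text \<open>Position in R^N of the variable t_{i,j}, j \<noteq> z i.\<close>
definition var_pos :: "(nat \<Rightarrow> nat) \<Rightarrow> (nat \<Rightarrow> nat) \<Rightarrow> nat \<Rightarrow> nat \<Rightarrow> nat" where
  "var_pos n z i j = blk_off n i + (if j < z i then j else j - 1)"

text \<open>Substitution t_{i,z i} = 1 - sum of the other t_{i,j}.\<close>
definition lift :: "(nat \<Rightarrow> nat) \<Rightarrow> (nat \<Rightarrow> nat) \<Rightarrow> (nat \<Rightarrow> real) \<Rightarrow> nat \<Rightarrow> nat \<Rightarrow> real" where
  "lift n z x i j =
     (if j = z i then 1 - (\<Sum>j'\<in>{..<n i} - {z i}. x (var_pos n z i j'))
      else x (var_pos n z i j))"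

definition f_z :: "nat \<Rightarrow> (nat \<Rightarrow> nat) \<Rightarrow> ((nat \<Rightarrow> nat) \<Rightarrow> real ^ 'm) \<Rightarrow> (nat \<Rightarrow> nat)
                    \<Rightarrow> (nat \<Rightarrow> real) \<Rightarrow> real ^ 'm" where
  "f_z k n \<phi> z x = fourier k n \<phi> (lift n z x)"

text \<open>C(phibar, z) = Delta_{z 1} x ... x Delta_{z k} inside R^N.\<close>
definition C_set :: "nat \<Rightarrow> (nat \<Rightarrow> nat) \<Rightarrow> (nat \<Rightarrow> nat) \<Rightarrow> (nat \<Rightarrow> real) set" where
  "C_set k n z = {x. (\<forall>p\<ge>NN k n. x p = 0) \<and>
                     (\<forall>i<k. (\<forall>j<n i. lift n z x i j \<ge> 0) \<and> lift n z x i (z i) \<noteq> 0)}"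

definition cs_at :: "nat \<Rightarrow> (nat \<Rightarrow> nat) \<Rightarrow> ((nat \<Rightarrow> nat) \<Rightarrow> real ^ 'm) \<Rightarrow> (nat \<Rightarrow> nat) \<Rightarrow> real" where
  "cs_at k n \<phi> z =
     (let N = NN k n in
      log 3 (3 ^ N - 2 * real (card (Elim_S N (S_set N - Sens N (C_set k n z) (f_z k n \<phi> z))))))"

definition cs :: "nat \<Rightarrow> (nat \<Rightarrow> nat) \<Rightarrow> ((nat \<Rightarrow> nat) \<Rightarrow> real ^ 'm) \<Rightarrow> real" where
  "cs k n \<phi> = Max (cs_at k n \<phi> ` idx_tuples k n)"

definition open_simplex_prod :: "nat \<Rightarrow> (nat \<Rightarrow> nat) \<Rightarrow> (nat \<Rightarrow> nat \<Rightarrow> real) set" where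
  "open_simplex_prod k n =
     PiE {..<k} (\<lambda>i. {t \<in> extensional {..<n i}. (\<forall>j<n i. t j > 0) \<and> (\<Sum>j<n i. t j) = 1})"

end

theory Submission
  imports Defs
begin



lemma S_set_sub: "S_set N \<subseteq> {xs. set xs \<subseteq> {-1,0,1::int} \<and> length xs = N}"
  unfolding S_set_def by auto

lemma S_set_finite: "finite (S_set N)"
  by (rule finite_subset[OF S_set_sub]) (simp add: finite_lists_length_eq)

lemma first_ex: assumes "\<exists>i<(N::nat). P i" shows "\<exists>i<N. P i \<and> (\<forall>j<i. \<not> P j)"
proof -
  from assms obtain i0 where i0: "i0 < N" "P i0" by auto
  let ?i = "LEAST i. P i"
  have 1: "P ?i" using i0(2) by (rule LeastI)
  have "?i \<le> i0" using i0(2) by (rule Least_le)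
  then have 2: "?i < N" using i0(1) by linarith
  have 3: "\<forall>j<?i. \<not> P j" using not_less_Least by blast
  show ?thesis using 1 2 3 by blast
qed

lemma S_set_neg_disj: "S_set N \<inter> map uminus ` S_set N = {}"
proof (rule ccontr)
  assume "S_set N \<inter> map uminus ` S_set N \<noteq> {}"
  then obtain xs where xs: "xs \<in> S_set N" "map uminus xs \<in> S_set N" by auto
  from xs(1) have "\<exists>i<N. xs ! i \<noteq> 0" and len: "length xs = N" unfolding S_set_def by auto
  then obtain i where i: "i < N" "xs ! i \<noteq> 0" "\<forall>j<i. xs ! j = 0"
    using first_ex[of N "\<lambda>i. xs ! i \<noteq> 0"] by auto
  have h1: "\<forall>i<N. xs ! i \<noteq> 0 \<and> (\<forall>j<i. xs ! j = 0) \<longrightarrow> xs ! i = 1"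
    using xs(1) unfolding S_set_def by blast
  have h2: "\<forall>i<N. map uminus xs ! i \<noteq> 0 \<and> (\<forall>j<i. map uminus xs ! j = 0) \<longrightarrow> map uminus xs ! i = 1"
    using xs(2) unfolding S_set_def by blast
  have e: "\<And>j. j < N \<Longrightarrow> map uminus xs ! j = - (xs ! j)" using len by simp
  have "xs ! i = 1" using h1 i by blast
  moreover have "map uminus xs ! i = 1" using h2 i e by simp
  ultimately show False using e[OF i(1)] by simp
qed

lemma S_set_card: "2 * card (S_set N) < 3 ^ N"
proof -
  let ?L = "{xs. set xs \<subseteq> {-1,0,1::int} \<and> length xs = N}"
  have fL: "finite ?L" by (simp add: finite_lists_length_eq)
  have cL: "card ?L = 3 ^ N" using card_lists_length_eq[of "{-1,0,1::int}" N] by (simp add: numeral_3_eq_3)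
  have s2: "map uminus ` S_set N \<subseteq> ?L"
  proof
    fix ys assume "ys \<in> map uminus ` S_set N"
    then obtain xs where "xs \<in> S_set N" "ys = map uminus xs" by auto
    then have "set xs \<subseteq> {-1,0,1}" "length xs = N" "ys = map uminus xs" unfolding S_set_def by blast+
    then show "ys \<in> ?L" by auto
  qed
  have z: "replicate N 0 \<in> ?L" by auto
  have zS: "replicate N 0 \<notin> S_set N" unfolding S_set_def by auto
  have zS2: "replicate N 0 \<notin> map uminus ` S_set N"
  proof
    assume "replicate N 0 \<in> map uminus ` S_set N"
    then obtain x where x: "x \<in> S_set N" "replicate N 0 = map uminus x" by auto
    have "x = map uminus (map uminus x)" by (simp add: comp_def)
    also have "\<dots> = map uminus (replicate N (0::int))" by (subst x(2)) (rule refl)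
    also have "\<dots> = replicate N 0" by simp
    finally have "x = replicate N 0" .
    then show False using x(1) zS by blast
  qed
  have inj: "inj (map (uminus :: int \<Rightarrow> int))" by (simp add: inj_on_def)
  have c2: "card (map uminus ` S_set N) = card (S_set N)"
    by (rule card_image[OF inj_on_subset[OF inj subset_UNIV]])
  have sub: "insert (replicate N 0) (S_set N \<union> map uminus ` S_set N) \<subseteq> ?L"
    using S_set_sub[of N] s2 z by (intro insert_subsetI Un_least)
  have "card (insert (replicate N 0) (S_set N \<union> map uminus ` S_set N)) = 1 + 2 * card (S_set N)"
  proof -
    have f1: "finite (S_set N)" by (rule S_set_finite)
    have f2: "finite (map uminus ` S_set N)" using f1 by simp
    have "card (S_set N \<union> map uminus ` S_set N) = card (S_set N) + card (map uminus ` S_set N)"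
      by (rule card_Un_disjoint[OF f1 f2 S_set_neg_disj])
    moreover have "replicate N 0 \<notin> S_set N \<union> map uminus ` S_set N" using zS zS2 by blast
    ultimately show ?thesis using f1 f2 c2 by (simp only: card_insert_disjoint finite_UnI) simp
  qed
  moreover have "card (insert (replicate N 0) (S_set N \<union> map uminus ` S_set N)) \<le> 3 ^ N"
    using card_mono[OF fL sub] cL by simp
  ultimately show ?thesis by simp
qed

lemma self_elim: assumes "s \<in> S_set N" shows "eliminates N (map int_to_sgnu s) s"
proof -
  from assms obtain i where i: "i < N" "s ! i \<noteq> 0" and len: "length s = N" unfolding S_set_def by auto
  have "int_to_sgnu (s ! i) \<noteq> SZero" using i(2) by (simp add: int_to_sgnu_def)
  then show ?thesis using i len unfolding eliminates_def
    by (auto simp: int_to_sgnu_def intro!: bexI[of _ 1])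
qed

lemma idx_fin: "finite (idx_tuples k n)"
  unfolding idx_tuples_def by (simp add: finite_PiE)

lemma partA:
  fixes \<phi> :: "(nat \<Rightarrow> nat) \<Rightarrow> real ^ 'm"
  assumes n1: "\<forall>i<k. n i \<ge> 1" and cs: "cs k n \<phi> = real (NN k n)"
  shows "\<exists>z\<in>idx_tuples k n. S_set (NN k n) \<subseteq> Sens (NN k n) (C_set k n z) (f_z k n \<phi> z)"
proof -
  let ?I = "idx_tuples k n"
  let ?N = "NN k n"
  have ne: "?I \<noteq> {}"
  proof -
    have "restrict (\<lambda>_. 0) {..<k} \<in> ?I"
      unfolding idx_tuples_def using n1 by (auto simp: PiE_iff)
    then show ?thesis by blast
  qed
  have "Max (cs_at k n \<phi> ` ?I) \<in> cs_at k n \<phi> ` ?I"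
    using ne idx_fin by (intro Max_in) auto
  then obtain z where z: "z \<in> ?I" "cs_at k n \<phi> z = real ?N"
    using cs unfolding cs_def by auto
  define E where "E = Elim_S ?N (S_set ?N - Sens ?N (C_set k n z) (f_z k n \<phi> z))"
  have ES: "E \<subseteq> S_set ?N" unfolding E_def Elim_S_def Elim_def by blast
  have fE: "finite E" using finite_subset[OF ES S_set_finite] .
  have cE: "card E \<le> card (S_set ?N)" using card_mono[OF S_set_finite ES] .
  have "2 * card E < 3 ^ ?N" using cE S_set_card[of ?N] by linarith
  then have "real (2 * card E) < real (3 ^ ?N)" by (simp only: of_nat_less_iff)
  then have ypos: "0 < (3::real) ^ ?N - 2 * real (card E)" by simp
  have "log 3 ((3::real) ^ ?N - 2 * real (card E)) = real ?N"
    using z(2) unfolding cs_at_def Let_def E_def by simp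
  moreover have "(3::real) powr (log 3 ((3::real) ^ ?N - 2 * real (card E))) = (3::real) ^ ?N - 2 * real (card E)"
    by (rule powr_log_cancel) (use ypos in auto)
  ultimately have "(3::real) ^ ?N - 2 * real (card E) = 3 powr (real ?N)"
    by simp
  also have "\<dots> = 3 ^ ?N" by (simp add: powr_realpow)
  finally have "card E = 0" by simp
  then have E0: "E = {}" using fE by simp
  have "S_set ?N \<subseteq> Sens ?N (C_set k n z) (f_z k n \<phi> z)"
  proof
    fix s assume s: "s \<in> S_set ?N"
    show "s \<in> Sens ?N (C_set k n z) (f_z k n \<phi> z)"
    proof (rule ccontr)
      assume "s \<notin> Sens ?N (C_set k n z) (f_z k n \<phi> z)"
      then have "s \<in> E" unfolding E_def Elim_S_def Elim_def
        using s self_elim[OF s] by blast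
      then show False using E0 by blast
    qed
  qed
  then show ?thesis using z(1) by blast
qed




definition ell :: "(nat \<Rightarrow> nat) \<Rightarrow> (nat \<Rightarrow> nat) \<Rightarrow> (nat \<Rightarrow> real) \<Rightarrow> nat \<Rightarrow> nat \<Rightarrow> real" where
  "ell n z w i j = lift n z w i j - lift n z (\<lambda>_. 0) i j"

lemma ell_eq: "ell n z w i j = (if j = z i then - (\<Sum>j'\<in>{..<n i} - {z i}. w (var_pos n z i j')) else w (var_pos n z i j))"
  unfolding ell_def lift_def by simp

lemma lift_aff: "lift n z (\<lambda>q. x q + t * w q) i j = lift n z x i j + t * ell n z w i j"
  unfolding ell_eq lift_def by (simp add: sum.distrib sum_distrib_left algebra_simps)

definition ev :: "nat \<Rightarrow> nat \<Rightarrow> real" where "ev p = (\<lambda>q. if q = p then 1 else 0)"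

lemma ev_sum: assumes "\<forall>q\<ge>N. v q = 0" shows "(\<Sum>p<N. v p * ev p q) = v q"
proof -
  have "(\<Sum>p<N. v p * ev p q) = (\<Sum>p<N. if q = p then v p else 0)"
    unfolding ev_def by (intro sum.cong) auto
  also have "\<dots> = (if q < N then v q else 0)" by simp
  also have "\<dots> = v q" using assms by auto
  finally show ?thesis .
qed

lemma ell_lin: assumes "\<forall>q\<ge>N. v q = 0"
  shows "(\<Sum>p<N. v p * ell n z (ev p) i j) = ell n z v i j"
proof (cases "j = z i")
  case True
  have "(\<Sum>p<N. v p * ell n z (ev p) i j)
      = - (\<Sum>j'\<in>{..<n i} - {z i}. (\<Sum>p<N. v p * ev p (var_pos n z i j')))"
    unfolding ell_eq using True
    by (simp add: sum_distrib_left sum_negf[symmetric] sum.swap[of _ "{..<N}"])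
  also have "\<dots> = ell n z v i j" unfolding ell_eq using True ev_sum[OF assms] by simp
  finally show ?thesis .
next
  case False
  then show ?thesis unfolding ell_eq using ev_sum[OF assms] by simp
qed

definition Dfz :: "nat \<Rightarrow> (nat \<Rightarrow> nat) \<Rightarrow> ((nat \<Rightarrow> nat) \<Rightarrow> real ^ 'm) \<Rightarrow> (nat \<Rightarrow> nat)
                    \<Rightarrow> (nat \<Rightarrow> real) \<Rightarrow> (nat \<Rightarrow> real) \<Rightarrow> real ^ 'm" where
  "Dfz k n \<phi> z y w = (\<Sum>J\<in>idx_tuples k n.
      (\<Sum>s<k. ell n z w s (J s) * (\<Prod>r\<in>{..<k} - {s}. lift n z y r (J r))) *\<^sub>R \<phi> J)"

lemma path_deriv:
  "((\<lambda>\<tau>. f_z k n \<phi> z (\<lambda>q. x q + \<tau> * w q)) has_vector_derivative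
      Dfz k n \<phi> z (\<lambda>q. x q + t * w q) w) (at t)"
proof -
  have eq: "(\<lambda>\<tau>. f_z k n \<phi> z (\<lambda>q. x q + \<tau> * w q)) =
     (\<lambda>\<tau>. \<Sum>J\<in>idx_tuples k n. (\<Prod>s<k. lift n z x s (J s) + \<tau> * ell n z w s (J s)) *\<^sub>R \<phi> J)"
    unfolding f_z_def fourier_def lift_aff by simp
  have "((\<lambda>\<tau>. \<Sum>J\<in>idx_tuples k n. (\<Prod>s<k. lift n z x s (J s) + \<tau> * ell n z w s (J s)) *\<^sub>R \<phi> J)
      has_vector_derivative
      (\<Sum>J\<in>idx_tuples k n. (\<Sum>s<k. ell n z w s (J s) *
          (\<Prod>r\<in>{..<k} - {s}. lift n z x r (J r) + t * ell n z w r (J r))) *\<^sub>R \<phi> J)) (at t)"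
  proof (rule has_vector_derivative_sum)
    fix J assume "J \<in> idx_tuples k n"
    have d: "((\<lambda>\<tau>. \<Prod>s<k. lift n z x s (J s) + \<tau> * ell n z w s (J s)) has_field_derivative
        (\<Sum>s<k. ell n z w s (J s) * (\<Prod>r\<in>{..<k} - {s}. lift n z x r (J r) + t * ell n z w r (J r)))) (at t)"
      by (rule has_field_derivative_prod) (auto intro!: derivative_eq_intros)
    have "((\<lambda>\<tau>. (\<Prod>s<k. lift n z x s (J s) + \<tau> * ell n z w s (J s)) *\<^sub>R \<phi> J) has_vector_derivative
        ((\<Prod>s<k. lift n z x s (J s) + t * ell n z w s (J s)) *\<^sub>R 0 +
         (\<Sum>s<k. ell n z w s (J s) * (\<Prod>r\<in>{..<k} - {s}. lift n z x r (J r) + t * ell n z w r (J r))) *\<^sub>R \<phi> J)) (at t)"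
      by (rule has_vector_derivative_scaleR[OF d has_vector_derivative_const])
    then show "((\<lambda>\<tau>. (\<Prod>s<k. lift n z x s (J s) + \<tau> * ell n z w s (J s)) *\<^sub>R \<phi> J) has_vector_derivative
        (\<Sum>s<k. ell n z w s (J s) * (\<Prod>r\<in>{..<k} - {s}. lift n z x r (J r) + t * ell n z w r (J r))) *\<^sub>R \<phi> J) (at t)"
      by simp
  qed
  then show ?thesis unfolding eq Dfz_def lift_aff .
qed

lemma chain_real:
  fixes \<pi> :: "real ^ 'm \<Rightarrow> real" and p :: "real \<Rightarrow> real ^ 'm"
  assumes p: "(p has_vector_derivative V) (at t)" and pi: "\<pi> differentiable (at (p t))"
  shows "((\<lambda>\<tau>. \<pi> (p \<tau>)) has_real_derivative frechet_derivative \<pi> (at (p t)) V) (at t)"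
proof -
  let ?D = "frechet_derivative \<pi> (at (p t))"
  have pd: "(\<pi> has_derivative ?D) (at (p t))" using pi frechet_derivative_works by blast
  have lin: "linear ?D" using has_derivative_linear[OF pd] .
  have "((\<pi> \<circ> p) has_derivative (?D \<circ> (\<lambda>h. h *\<^sub>R V))) (at t)"
    using diff_chain_at[OF p[unfolded has_vector_derivative_def] pd] .
  moreover have "(?D \<circ> (\<lambda>h. h *\<^sub>R V)) = (*) (?D V)"
    using linear_cmul[OF lin] by (auto simp: fun_eq_iff)
  ultimately show ?thesis unfolding has_field_derivative_def comp_def by simp
qed

lemma partial_eq:
  fixes \<pi> :: "real ^ 'm \<Rightarrow> real" and \<phi> :: "(nat \<Rightarrow> nat) \<Rightarrow> real ^ 'm"
  assumes pi: "\<forall>y. \<pi> differentiable (at y)"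
  shows "partial_deriv (\<pi> \<circ> f_z k n \<phi> z) p y =
         frechet_derivative \<pi> (at (f_z k n \<phi> z y)) (Dfz k n \<phi> z y (ev p))"
proof -
  have e1: "\<And>h. y(p := y p + h) = (\<lambda>q. y q + h * ev p q)"
    unfolding ev_def by (auto simp: fun_eq_iff)
  have e0: "(\<lambda>q. y q + 0 * ev p q) = y" by simp
  have "((\<lambda>\<tau>. \<pi> (f_z k n \<phi> z (\<lambda>q. y q + \<tau> * ev p q))) has_real_derivative
         frechet_derivative \<pi> (at (f_z k n \<phi> z (\<lambda>q. y q + 0 * ev p q)))
           (Dfz k n \<phi> z (\<lambda>q. y q + 0 * ev p q) (ev p))) (at 0)"
    by (rule chain_real[OF path_deriv]) (use pi in blast)
  then have "deriv (\<lambda>\<tau>. \<pi> (f_z k n \<phi> z (\<lambda>q. y q + \<tau> * ev p q))) 0 =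
         frechet_derivative \<pi> (at (f_z k n \<phi> z y)) (Dfz k n \<phi> z y (ev p))"
    unfolding e0 by (rule DERIV_imp_deriv)
  then show ?thesis unfolding partial_deriv_def e1 comp_def .
qed

lemma Dfz_lin:
  assumes vN: "\<forall>q\<ge>N. v q = 0"
  shows "(\<Sum>p<N. v p *\<^sub>R Dfz k n \<phi> z y (ev p)) = Dfz k n \<phi> z y v"
proof -
  let ?Q = "\<lambda>J s. (\<Prod>r\<in>{..<k} - {s}. lift n z y r (J r))"
  have "(\<Sum>p<N. v p *\<^sub>R Dfz k n \<phi> z y (ev p))
     = (\<Sum>p<N. \<Sum>J\<in>idx_tuples k n. (v p * (\<Sum>s<k. ell n z (ev p) s (J s) * ?Q J s)) *\<^sub>R \<phi> J)"
    unfolding Dfz_def by (simp add: scaleR_sum_right)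
  also have "\<dots> = (\<Sum>J\<in>idx_tuples k n. \<Sum>p<N. (v p * (\<Sum>s<k. ell n z (ev p) s (J s) * ?Q J s)) *\<^sub>R \<phi> J)"
    by (rule sum.swap)
  also have "\<dots> = (\<Sum>J\<in>idx_tuples k n. (\<Sum>p<N. v p * (\<Sum>s<k. ell n z (ev p) s (J s) * ?Q J s)) *\<^sub>R \<phi> J)"
    by (simp add: scaleR_sum_left)
  also have "\<dots> = (\<Sum>J\<in>idx_tuples k n. (\<Sum>s<k. (\<Sum>p<N. v p * ell n z (ev p) s (J s)) * ?Q J s) *\<^sub>R \<phi> J)"
  proof -
    have "\<And>J. (\<Sum>p<N. v p * (\<Sum>s<k. ell n z (ev p) s (J s) * ?Q J s)) =
               (\<Sum>s<k. (\<Sum>p<N. v p * ell n z (ev p) s (J s)) * ?Q J s)"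
      by (simp add: sum_distrib_left sum_distrib_right mult.assoc sum.swap[of _ "{..<N}"])
    then show ?thesis by simp
  qed
  also have "\<dots> = Dfz k n \<phi> z y v"
    unfolding Dfz_def ell_lin[OF vN] ..
  finally show ?thesis .
qed

lemma sum_partial:
  fixes \<pi> :: "real ^ 'm \<Rightarrow> real" and \<phi> :: "(nat \<Rightarrow> nat) \<Rightarrow> real ^ 'm"
  assumes pi: "\<forall>y. \<pi> differentiable (at y)" and vN: "\<forall>q\<ge>N. v q = 0"
  shows "(\<Sum>p<N. v p * partial_deriv (\<pi> \<circ> f_z k n \<phi> z) p y) =
         frechet_derivative \<pi> (at (f_z k n \<phi> z y)) (Dfz k n \<phi> z y v)"
proof -
  let ?D = "frechet_derivative \<pi> (at (f_z k n \<phi> z y))"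
  have lin: "linear ?D"
    using pi frechet_derivative_works has_derivative_linear by blast
  have "(\<Sum>p<N. v p * partial_deriv (\<pi> \<circ> f_z k n \<phi> z) p y) = (\<Sum>p<N. v p * ?D (Dfz k n \<phi> z y (ev p)))"
    using partial_eq[OF pi] by simp
  also have "\<dots> = (\<Sum>p<N. ?D (v p *\<^sub>R Dfz k n \<phi> z y (ev p)))"
    using linear_cmul[OF lin] by simp
  also have "\<dots> = ?D (\<Sum>p<N. v p *\<^sub>R Dfz k n \<phi> z y (ev p))"
    by (rule linear_sum[OF lin, symmetric])
  also have "\<dots> = ?D (Dfz k n \<phi> z y v)" using Dfz_lin[OF vN, of k n \<phi> z y] by (rule arg_cong)
  finally show ?thesis .
qed




lemma blk_Suc: "blk_off n (Suc i) = blk_off n i + (n i - 1)"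
  by (simp add: blk_off_def)

lemma blk_mono: "i \<le> i' \<Longrightarrow> blk_off n i \<le> blk_off n i'"
  unfolding blk_off_def by (rule sum_mono2) auto

lemma blk_aux: fixes n :: "nat \<Rightarrow> nat" and k :: nat
  shows "(\<forall>i<k. 1 \<le> n i) \<Longrightarrow> (\<Sum>s<k. n s - 1) + k = (\<Sum>s<k. n s)"
  by (induction k) auto

lemma blk_NN: "(\<forall>i<k. 1 \<le> n i) \<Longrightarrow> blk_off n k = NN k n"
  using blk_aux[of k n] unfolding blk_off_def NN_def by simp

lemma vp_bnd:
  assumes "j < n i" "j \<noteq> z i" "z i < n i"
  shows "blk_off n i \<le> var_pos n z i j \<and> var_pos n z i j < blk_off n (Suc i)"
  using assms unfolding var_pos_def blk_Suc by auto

lemma vp_lt_NN: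
  assumes n1: "\<forall>i<k. 1 \<le> n i" and "i < k" "j < n i" "j \<noteq> z i" "z i < n i"
  shows "var_pos n z i j < NN k n"
proof -
  have "var_pos n z i j < blk_off n (Suc i)" using vp_bnd assms(3-5) by blast
  also have "\<dots> \<le> blk_off n k" using assms(2) by (intro blk_mono) simp
  finally show ?thesis using blk_NN[OF n1] by simp
qed

lemma vp_inj:
  assumes "j < n i" "j \<noteq> z i" "z i < n i" "j' < n i'" "j' \<noteq> z i'" "z i' < n i'"
    and eq: "var_pos n z i j = var_pos n z i' j'"
  shows "i = i' \<and> j = j'"
proof (cases i i' rule: linorder_cases)
  case less
  have "var_pos n z i j < blk_off n (Suc i)" using vp_bnd assms(1-3) by blast
  also have "\<dots> \<le> blk_off n i'" using less by (intro blk_mono) simp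
  also have "\<dots> \<le> var_pos n z i' j'" using vp_bnd assms(4-6) by blast
  finally show ?thesis using eq by simp
next
  case greater
  have "var_pos n z i' j' < blk_off n (Suc i')" using vp_bnd assms(4-6) by blast
  also have "\<dots> \<le> blk_off n i" using greater by (intro blk_mono) simp
  also have "\<dots> \<le> var_pos n z i j" using vp_bnd assms(1-3) by blast
  finally show ?thesis using eq by simp
next
  case equal
  then show ?thesis using eq assms(2,5) unfolding var_pos_def by (auto split: if_splits)
qed

definition emb :: "nat \<Rightarrow> (nat \<Rightarrow> nat) \<Rightarrow> (nat \<Rightarrow> nat) \<Rightarrow> (nat \<Rightarrow> nat \<Rightarrow> real) \<Rightarrow> nat \<Rightarrow> real" where
  "emb k n z t q = (\<Sum>x\<in>Sigma {..<k} (\<lambda>i. {..<n i} - {z i}).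
                      if var_pos n z (fst x) (snd x) = q then t (fst x) (snd x) else 0)"

lemma emb_vp:
  assumes zI: "\<forall>i<k. z i < n i" and "i < k" "j < n i" "j \<noteq> z i"
  shows "emb k n z t (var_pos n z i j) = t i j"
proof -
  let ?S = "Sigma {..<k} (\<lambda>i. {..<n i} - {z i})"
  have "emb k n z t (var_pos n z i j) = (\<Sum>x\<in>?S. if x = (i, j) then t i j else 0)"
    unfolding emb_def
  proof (rule sum.cong[OF refl])
    fix x assume x: "x \<in> ?S"
    show "(if var_pos n z (fst x) (snd x) = var_pos n z i j then t (fst x) (snd x) else 0)
          = (if x = (i, j) then t i j else 0)"
    proof (cases "var_pos n z (fst x) (snd x) = var_pos n z i j")
      case True
      have "fst x = i \<and> snd x = j"
        using vp_inj[OF _ _ _ _ _ _ True] x zI assms(2-4) by (auto simp: mem_Times_iff)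
      then show ?thesis using True by (cases x) auto
    next
      case False
      then show ?thesis by auto
    qed
  qed
  also have "\<dots> = t i j" using assms(2-4) by (simp add: finite_SigmaI)
  finally show ?thesis .
qed

lemma emb_big:
  assumes n1: "\<forall>i<k. 1 \<le> n i" and zI: "\<forall>i<k. z i < n i" and q: "q \<ge> NN k n"
  shows "emb k n z t q = 0"
  unfolding emb_def
proof (rule sum.neutral, rule ballI)
  fix x assume x: "x \<in> Sigma {..<k} (\<lambda>i. {..<n i} - {z i})"
  have "var_pos n z (fst x) (snd x) < NN k n"
    using x n1 zI by (intro vp_lt_NN) auto
  then show "(if var_pos n z (fst x) (snd x) = q then t (fst x) (snd x) else 0) = 0"
    using q by auto
qed

lemma osp_D:
  assumes "t \<in> open_simplex_prod k n" "i < k"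
  shows "t i \<in> extensional {..<n i}" "\<forall>j<n i. t i j > 0" "(\<Sum>j<n i. t i j) = 1"
  using assms unfolding open_simplex_prod_def by (auto simp: PiE_iff)

lemma lift_emb:
  assumes zI: "\<forall>i<k. z i < n i" and t: "t \<in> open_simplex_prod k n" and i: "i < k" and j: "j < n i"
  shows "lift n z (emb k n z t) i j = t i j"
proof (cases "j = z i")
  case True
  have "(\<Sum>j'\<in>{..<n i} - {z i}. emb k n z t (var_pos n z i j')) = (\<Sum>j'\<in>{..<n i} - {z i}. t i j')"
    using zI i by (intro sum.cong) (auto intro!: emb_vp)
  moreover have "(\<Sum>j<n i. t i j) = t i (z i) + (\<Sum>j'\<in>{..<n i} - {z i}. t i j')"
    using zI i by (intro sum.remove) auto
  ultimately show ?thesis using True osp_D(3)[OF t i] unfolding lift_def by simp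
next
  case False
  then show ?thesis unfolding lift_def using emb_vp[OF zI i j False] by simp
qed

lemma fourier_emb:
  assumes zI: "\<forall>i<k. z i < n i" and t: "t \<in> open_simplex_prod k n"
  shows "fourier k n \<phi> (lift n z (emb k n z t)) = fourier k n \<phi> t"
  unfolding fourier_def
proof (rule sum.cong[OF refl])
  fix J assume J: "J \<in> idx_tuples k n"
  have "(\<Prod>s<k. lift n z (emb k n z t) s (J s)) = (\<Prod>s<k. t s (J s))"
  proof (rule prod.cong[OF refl])
    fix s assume s: "s \<in> {..<k}"
    have "J s < n s" using J s unfolding idx_tuples_def by (auto simp: PiE_iff)
    then show "lift n z (emb k n z t) s (J s) = t s (J s)" using lift_emb[OF zI t] s by simp
  qed
  then show "(\<Prod>s<k. lift n z (emb k n z t) s (J s)) *\<^sub>R \<phi> J = (\<Prod>s<k. t s (J s)) *\<^sub>R \<phi> J"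
    by simp
qed

lemma emb_C:
  assumes n1: "\<forall>i<k. 1 \<le> n i" and zI: "\<forall>i<k. z i < n i" and t: "t \<in> open_simplex_prod k n"
  shows "emb k n z t \<in> C_set k n z"
  unfolding C_set_def
proof (intro CollectI conjI allI impI)
  fix p assume "NN k n \<le> p" then show "emb k n z t p = 0" using emb_big[OF n1 zI] by simp
next
  fix i j assume i: "i < k" and j: "j < n i"
  show "0 \<le> lift n z (emb k n z t) i j" using lift_emb[OF zI t i j] osp_D(2)[OF t i] j
    by (simp add: less_imp_le)
next
  fix i assume i: "i < k"
  show "lift n z (emb k n z t) i (z i) \<noteq> 0" using lift_emb[OF zI t i] zI i osp_D(2)[OF t i]
    by (metis less_irrefl)
qed

lemma emb_eq:
  assumes n1: "\<forall>i<k. 1 \<le> n i" and zI: "\<forall>i<k. z i < n i"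
    and a: "a \<in> open_simplex_prod k n" and b: "b \<in> open_simplex_prod k n"
    and eq: "\<forall>p<NN k n. emb k n z a p = emb k n z b p"
  shows "a = b"
proof -
  have ee: "emb k n z a = emb k n z b"
  proof
    fix p show "emb k n z a p = emb k n z b p"
      using eq emb_big[OF n1 zI, of p] by (cases "p < NN k n") auto
  qed
  show ?thesis
  proof (rule PiE_ext[OF a[unfolded open_simplex_prod_def] b[unfolded open_simplex_prod_def]])
    fix i assume i: "i \<in> {..<k}"
    have ai: "a i \<in> extensional {..<n i}" using osp_D(1)[OF a] i by simp
    have bi: "b i \<in> extensional {..<n i}" using osp_D(1)[OF b] i by simp
    show "a i = b i"
    proof (rule extensionalityI[OF ai bi])
      fix j assume j: "j \<in> {..<n i}"
      show "a i j = b i j" using lift_emb[OF zI a, of i j] lift_emb[OF zI b, of i j] ee i j by simp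
    qed
  qed
qed




definition isgn :: "real \<Rightarrow> int" where
  "isgn r = (if r > 0 then 1 else if r < 0 then -1 else 0)"

lemma sign_onD:
  assumes "x \<in> C"
  shows "sign_on C g = SPos \<Longrightarrow> g x > 0" "sign_on C g = SNeg \<Longrightarrow> g x < 0"
        "sign_on C g = SZero \<Longrightarrow> g x = 0"
  using assms unfolding sign_on_def by (auto split: if_splits)

lemma isgn_abs: "v = real_of_int (isgn v) * \<bar>v\<bar>"
  unfolding isgn_def by auto

lemma term_sign:
  fixes \<kappa> \<sigma> :: int and v d :: real
  assumes k: "\<kappa> \<in> {1,-1}" and s: "\<sigma> \<in> {1,-1}" and v: "v \<noteq> 0"
    and hz: "T = SZero \<Longrightarrow> d = 0" and hp: "T = SPos \<Longrightarrow> d > 0" and hn: "T = SNeg \<Longrightarrow> d < 0"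
    and hT: "T \<noteq> SU" and hk: "T \<noteq> SZero \<Longrightarrow> T = int_to_sgnu (\<kappa> * (\<sigma> * isgn v))"
  shows "0 \<le> real_of_int (\<kappa> * \<sigma>) * (v * d) \<and> (T \<noteq> SZero \<longrightarrow> 0 < real_of_int (\<kappa> * \<sigma>) * (v * d))"
proof (cases "T = SZero")
  case True
  then show ?thesis using hz by simp
next
  case False
  let ?e = "\<kappa> * (\<sigma> * isgn v)"
  have iv: "isgn v = 1 \<or> isgn v = -1" using v unfolding isgn_def by auto
  have e: "?e = 1 \<or> ?e = -1" using k s iv by auto
  have av: "\<bar>v\<bar> > 0" using v by simp
  have eq: "real_of_int (\<kappa> * \<sigma>) * (v * d) = real_of_int ?e * (\<bar>v\<bar> * d)"
    by (subst isgn_abs[of v]) (simp add: algebra_simps)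
  have "0 < real_of_int ?e * (\<bar>v\<bar> * d)"
  proof (cases "?e = 1")
    case True
    then have "T = SPos" using hk[OF False] by (simp add: int_to_sgnu_def)
    then have "d > 0" by (rule hp)
    then show ?thesis using True av by simp
  next
    case e2: False
    then have em: "?e = -1" using e by blast
    then have "T = SNeg" using hk[OF False] by (simp add: int_to_sgnu_def)
    then have "d < 0" by (rule hn)
    then show ?thesis using em av by (simp add: mult_pos_neg)
  qed
  then have "0 < real_of_int (\<kappa> * \<sigma>) * (v * d)" by (subst eq)
  then show ?thesis by (simp add: less_imp_le)
qed

lemma sign_sum:
  assumes el: "eliminates N (Sign_on N C g) s"
    and s: "s = map (\<lambda>p. \<sigma> * isgn (v p)) [0..<N]" and sg: "\<sigma> \<in> {1,-1}"
  shows "\<exists>c::real. \<forall>x\<in>C. 0 < c * (\<Sum>p<N. v p * partial_deriv g p x)"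
proof -
  let ?t = "Sign_on N C g"
  have tn: "\<And>p. p < N \<Longrightarrow> ?t ! p = sign_on C (partial_deriv g p)"
    unfolding Sign_on_def by simp
  have sn: "\<And>p. p < N \<Longrightarrow> s ! p = \<sigma> * isgn (v p)" using s by simp
  from el obtain i0 where i0: "i0 < N" "?t ! i0 \<noteq> SZero" "s ! i0 \<noteq> 0"
    unfolding eliminates_def by blast
  from el obtain \<kappa> where k: "\<kappa> \<in> {1,-1::int}"
    and hk: "\<forall>i<N. s ! i \<noteq> 0 \<and> ?t ! i \<noteq> SZero \<longrightarrow> ?t ! i = int_to_sgnu (\<kappa> * s ! i)"
    unfolding eliminates_def by blast
  from el have hu: "\<forall>i<N. ?t ! i = SU \<longrightarrow> s ! i = 0" unfolding eliminates_def by blast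
  have s0: "\<And>p. p < N \<Longrightarrow> s ! p = 0 \<longleftrightarrow> v p = 0"
    using sg sn by (auto simp: isgn_def)
  let ?c = "real_of_int (\<kappa> * \<sigma>)"
  show ?thesis
  proof (intro exI ballI)
    fix x assume x: "x \<in> C"
    have tm: "0 \<le> ?c * (v p * partial_deriv g p x) \<and> (p = i0 \<longrightarrow> 0 < ?c * (v p * partial_deriv g p x))"
      if p: "p < N" for p
    proof (cases "v p = 0")
      case True
      then show ?thesis using s0[OF i0(1)] i0(3) by auto
    next
      case False
      have snz: "s ! p \<noteq> 0" using s0[OF p] False by simp
      note ts = term_sign[OF k sg False, of "?t ! p" "partial_deriv g p x"]
      have A: "?t ! p = SZero \<Longrightarrow> partial_deriv g p x = 0" using sign_onD(3)[OF x] tn[OF p] by simp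
      have B: "?t ! p = SPos \<Longrightarrow> partial_deriv g p x > 0" using sign_onD(1)[OF x] tn[OF p] by simp
      have Cc: "?t ! p = SNeg \<Longrightarrow> partial_deriv g p x < 0" using sign_onD(2)[OF x] tn[OF p] by simp
      have D: "?t ! p \<noteq> SU" using hu p snz by blast
      have E: "?t ! p \<noteq> SZero \<Longrightarrow> ?t ! p = int_to_sgnu (\<kappa> * (\<sigma> * isgn (v p)))"
        using hk p snz sn[OF p] by auto
      show ?thesis using ts[OF A B Cc D E] i0(2) by blast
    qed
    have "0 < (\<Sum>p<N. ?c * (v p * partial_deriv g p x))"
      by (rule sum_pos2[of "{..<N}" i0]) (use tm i0 in auto)
    then show "0 < ?c * (\<Sum>p<N. v p * partial_deriv g p x)"
      by (simp add: sum_distrib_left)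
  qed
qed

lemma conv_pos: "0 < (a::real) \<Longrightarrow> 0 < b \<Longrightarrow> 0 \<le> \<tau> \<Longrightarrow> \<tau> \<le> 1 \<Longrightarrow> 0 < (1 - \<tau>) * a + \<tau> * b"
  by (cases "\<tau> = 0") (auto intro: add_nonneg_pos mult_pos_pos)

lemma conv_nn: "0 \<le> (a::real) \<Longrightarrow> 0 \<le> b \<Longrightarrow> 0 \<le> \<tau> \<Longrightarrow> \<tau> \<le> 1 \<Longrightarrow> 0 \<le> (1 - \<tau>) * a + \<tau> * b"
  by simp

lemma seg_C:
  assumes zI: "\<forall>i<k. z i < n i" and x: "x \<in> C_set k n z" and y: "y \<in> C_set k n z"
    and t0: "0 \<le> \<tau>" and t1: "\<tau> \<le> 1"
  shows "(\<lambda>q. x q + \<tau> * (y q - x q)) \<in> C_set k n z"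
proof -
  let ?w = "\<lambda>q. y q - x q"
  have L: "\<And>i j. lift n z (\<lambda>q. x q + \<tau> * (y q - x q)) i j = (1 - \<tau>) * lift n z x i j + \<tau> * lift n z y i j"
  proof -
    fix i j
    have "lift n z (\<lambda>q. x q + 1 * ?w q) i j = lift n z x i j + 1 * ell n z ?w i j" by (rule lift_aff)
    moreover have "(\<lambda>q. x q + 1 * ?w q) = y" by simp
    ultimately have "lift n z y i j = lift n z x i j + ell n z ?w i j" by simp
    then show "lift n z (\<lambda>q. x q + \<tau> * (y q - x q)) i j = (1 - \<tau>) * lift n z x i j + \<tau> * lift n z y i j"
      using lift_aff[of n z x \<tau> ?w i j] by (simp add: algebra_simps)
  qed
  have xC: "\<forall>p\<ge>NN k n. x p = 0" "\<forall>i<k. (\<forall>j<n i. lift n z x i j \<ge> 0) \<and> lift n z x i (z i) \<noteq> 0"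
    using x unfolding C_set_def by auto
  have yC: "\<forall>p\<ge>NN k n. y p = 0" "\<forall>i<k. (\<forall>j<n i. lift n z y i j \<ge> 0) \<and> lift n z y i (z i) \<noteq> 0"
    using y unfolding C_set_def by auto
  show ?thesis unfolding C_set_def
  proof (intro CollectI conjI allI impI)
    fix p assume "NN k n \<le> p" then show "x p + \<tau> * (y p - x p) = 0" using xC(1) yC(1) by simp
  next
    fix i j assume i: "i < k" and j: "j < n i"
    show "0 \<le> lift n z (\<lambda>q. x q + \<tau> * (y q - x q)) i j"
      unfolding L using xC(2) yC(2) i j t0 t1 by (intro conv_nn) auto
  next
    fix i assume i: "i < k"
    have "lift n z x i (z i) > 0" using xC(2) i zI by (metis order_le_neq_trans)
    moreover have "lift n z y i (z i) > 0" using yC(2) i zI by (metis order_le_neq_trans)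
    ultimately show "lift n z (\<lambda>q. x q + \<tau> * (y q - x q)) i (z i) \<noteq> 0"
      unfolding L using conv_pos[OF _ _ t0 t1] by (metis less_irrefl)
  qed
qed

theorem corollary3p2:
  fixes k :: nat and n :: "nat \<Rightarrow> nat" and \<phi> :: "(nat \<Rightarrow> nat) \<Rightarrow> real ^ 'm"
  assumes "k \<ge> 1"
    and "\<forall>i<k. n i \<ge> 1"
    and "cs k n \<phi> = real (NN k n)"
  shows "inj_on (fourier k n \<phi>) (open_simplex_prod k n)"
proof -
  note n1 = assms(2)
  let ?N = "NN k n"
  obtain z where z: "z \<in> idx_tuples k n" and Sz: "S_set ?N \<subseteq> Sens ?N (C_set k n z) (f_z k n \<phi> z)"
    using partA[OF assms(2,3)] by blast
  have zI: "\<forall>i<k. z i < n i" using z unfolding idx_tuples_def by (auto simp: PiE_iff)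
  let ?C = "C_set k n z"
  let ?F = "f_z k n \<phi> z"
  show ?thesis
  proof (rule inj_onI, rule ccontr)
    fix a b assume a: "a \<in> open_simplex_prod k n" and b: "b \<in> open_simplex_prod k n"
      and fab: "fourier k n \<phi> a = fourier k n \<phi> b" and ab: "a \<noteq> b"
    define xa where "xa = emb k n z a"
    define xb where "xb = emb k n z b"
    define v where "v = (\<lambda>q. xb q - xa q)"
    have vN: "\<forall>q\<ge>?N. v q = 0" unfolding v_def xa_def xb_def using emb_big[OF n1 zI] by simp
    have "\<exists>p<?N. v p \<noteq> 0"
    proof (rule ccontr)
      assume "\<not> (\<exists>p<?N. v p \<noteq> 0)"
      then have "\<forall>p<?N. emb k n z a p = emb k n z b p" unfolding v_def xa_def xb_def by auto
      then have "a = b" by (rule emb_eq[OF n1 zI a b])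
      then show False using ab by simp
    qed
    then obtain p0 where p0: "p0 < ?N" "v p0 \<noteq> 0" "\<forall>j<p0. \<not> v j \<noteq> 0"
      using first_ex[of ?N "\<lambda>p. v p \<noteq> 0"] by blast
    define \<sigma> where "\<sigma> = isgn (v p0)"
    have sg: "\<sigma> \<in> {1,-1}" using p0(2) unfolding \<sigma>_def isgn_def by auto
    define s where "s = map (\<lambda>p. \<sigma> * isgn (v p)) [0..<?N]"
    have sn: "\<And>p. p < ?N \<Longrightarrow> s ! p = \<sigma> * isgn (v p)" unfolding s_def by simp
    have s0: "\<And>p. p < ?N \<Longrightarrow> s ! p = 0 \<longleftrightarrow> v p = 0" using sg sn by (auto simp: isgn_def)
    have sS: "s \<in> S_set ?N"
      unfolding S_set_def
    proof (intro CollectI conjI)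
      show "length s = ?N" unfolding s_def by simp
      show "set s \<subseteq> {-1, 0, 1}"
      proof
        fix e assume "e \<in> set s"
        then obtain p where e: "e = \<sigma> * isgn (v p)" unfolding s_def by auto
        have "isgn (v p) \<in> {-1,0,1}" by (simp add: isgn_def)
        then show "e \<in> {-1,0,1}" using sg e by auto
      qed
      show "\<exists>i<?N. s ! i \<noteq> 0" using p0 s0 by blast
      show "\<forall>i<?N. s ! i \<noteq> 0 \<and> (\<forall>j<i. s ! j = 0) \<longrightarrow> s ! i = 1"
      proof (intro allI impI)
        fix i assume i: "i < ?N" and h: "s ! i \<noteq> 0 \<and> (\<forall>j<i. s ! j = 0)"
        have "i = p0"
        proof (rule ccontr)
          assume "i \<noteq> p0"
          then have "i < p0 \<or> p0 < i" by linarith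
          then show False
          proof
            assume "i < p0" then show False using p0(3) h s0 i by auto
          next
            assume "p0 < i" then show False using h s0[OF p0(1)] p0(2) by auto
          qed
        qed
        then show "s ! i = 1" using sn[OF p0(1)] sg unfolding \<sigma>_def by (auto simp: isgn_def)
      qed
    qed
    then have "s \<in> Sens ?N ?C ?F" using Sz by blast
    then obtain \<pi> :: "real ^ 'm \<Rightarrow> real" where pi: "\<forall>y. \<pi> differentiable (at y)"
      and el: "eliminates ?N (Sign_on ?N ?C (\<pi> \<circ> ?F)) s"
      unfolding Sens_def by blast
    obtain c where c: "\<forall>x\<in>?C. 0 < c * (\<Sum>p<?N. v p * partial_deriv (\<pi> \<circ> ?F) p x)"
      using sign_sum[OF el s_def sg] by blast
    define h where "h = (\<lambda>\<tau>. c * \<pi> (?F (\<lambda>q. xa q + \<tau> * v q)))"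
    have xaC: "xa \<in> ?C" unfolding xa_def by (rule emb_C[OF n1 zI a])
    have xbC: "xb \<in> ?C" unfolding xb_def by (rule emb_C[OF n1 zI b])
    have "h 0 < h 1"
    proof (rule DERIV_pos_imp_increasing[OF zero_less_one])
      fix \<tau> :: real assume t0: "0 \<le> \<tau>" and t1: "\<tau> \<le> 1"
      let ?y = "\<lambda>q. xa q + \<tau> * v q"
      have yC: "?y \<in> ?C" using seg_C[OF zI xaC xbC t0 t1] unfolding v_def .
      have d: "((\<lambda>\<tau>. \<pi> (?F (\<lambda>q. xa q + \<tau> * v q))) has_real_derivative
          frechet_derivative \<pi> (at (?F ?y)) (Dfz k n \<phi> z ?y v)) (at \<tau>)"
        by (rule chain_real[OF path_deriv]) (use pi in blast)
      have "frechet_derivative \<pi> (at (?F ?y)) (Dfz k n \<phi> z ?y v) =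
            (\<Sum>p<?N. v p * partial_deriv (\<pi> \<circ> ?F) p ?y)"
        using sum_partial[OF pi vN] by simp
      then have "(h has_real_derivative c * (\<Sum>p<?N. v p * partial_deriv (\<pi> \<circ> ?F) p ?y)) (at \<tau>)"
        unfolding h_def using DERIV_cmult[OF d, of c] by simp
      then show "\<exists>y. (h has_real_derivative y) (at \<tau>) \<and> 0 < y" using c yC by blast
    qed
    moreover have "h 0 = h 1"
    proof -
      have e0: "(\<lambda>q. xa q + 0 * v q) = xa" by simp
      have e1: "(\<lambda>q. xa q + 1 * v q) = xb" unfolding v_def by simp
      have "?F xa = ?F xb"
        unfolding xa_def xb_def f_z_def fourier_emb[OF zI a] fourier_emb[OF zI b] by (rule fab)
      then show ?thesis unfolding h_def e0 e1 by simp
    qed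
    ultimately show False by simp
  qed
qed


end
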